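(* Let $p\in\mathbb{C}[z_1,\dots,z_d]$ have no zeros in $\mathbb{D}^d$ and vanish to order $M$ at $u=(1,\dots,1)$, with $p(u-\zeta)=\sum_{j\ge M}P_j(\zeta)$ ($P_j$ homogeneous of degree $j$). Let $q\in\mathbb{C}[z_1,\dots,z_d]$ vanish to order at least $M$ at $u$, with $q(u-\zeta)=\sum_{j\ge0}Q_j(\zeta)$ ($Q_j$ homogeneous of degree $j$), and let $f=q/p$. Then $f$ has a limit along non-tangential approach regions to $u$ if and only if $Q_M=bP_M$ for some constant $b\in\mathbb{C}$; in this case the non-tangential limit equals $b$.
   Context: $\mathbb{D}$ is the open unit disk; $RHP=\{\zeta\in\mathbb{C}:\mathrm{Re}\,\zeta>0\}$. A polynomial vanishes to order $M$ at $u$ if the lowest-degree nonzero homogeneous term of its expansion in $\zeta$ at $u$ (via $z=u-\zeta$) has degree $M$. For $\zeta\in RHP^d$ let $D_\zeta=\{|\zeta_1|,\dots,|\zeta_d|,\mathrm{Re}\,\zeta_1,\dots,\mathrm{Re}\,\zeta_d\}$, and for $c>1$ let $AR_c=\{\zeta\in RHP^d:1/c\le x/y\le c\ \forall x,y\in D_\zeta\}$. "$f$ has a limit along non-tangential approach regions to $u$" means there is $L$ with $\lim f(u-\zeta)=L$ as $\zeta\to0$ within $AR_c$, for every $c>1$. *)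

theory Defs
  imports "HOL-Analysis.Analysis"
begin

text \<open>Multivariate polynomials in d variables (d encoded by the finite index type 'd)
are represented by their finitely supported coefficient function in the expansion
around the point u = (1,...,1) in the variable zeta = u - z:
  p z = sum over alpha of a alpha * prod_i (1 - z_i)^(alpha i).
Every polynomial in C[z_1,...,z_d] has exactly one such representation.\<close>

type_synonym 'd multiidx = "'d \<Rightarrow> nat"

definition mdeg :: "('d::finite) multiidx \<Rightarrow> nat" where
  "mdeg \<alpha> = (\<Sum>i\<in>UNIV. \<alpha> i)"

definition monom_val :: "('d::finite) multiidx \<Rightarrow> complex^'d \<Rightarrow> complex" where
  "monom_val \<alpha> \<zeta> = (\<Prod>i\<in>UNIV. (\<zeta> $ i) ^ (\<alpha> i))"

definition uvec :: "complex^('d::finite)" where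
  "uvec = (\<chi> i. 1)"

definition poly_at_u :: "(('d::finite) multiidx \<Rightarrow> complex) \<Rightarrow> complex^'d \<Rightarrow> complex" where
  "poly_at_u a z = (\<Sum>\<alpha>\<in>{\<alpha>. a \<alpha> \<noteq> 0}. a \<alpha> * monom_val \<alpha> (uvec - z))"

text \<open>The homogeneous term of degree j of the expansion p(u - zeta) = sum_j P_j(zeta).\<close>
definition hom_part :: "(('d::finite) multiidx \<Rightarrow> complex) \<Rightarrow> nat \<Rightarrow> complex^'d \<Rightarrow> complex" where
  "hom_part a j \<zeta> = (\<Sum>\<alpha>\<in>{\<alpha>. a \<alpha> \<noteq> 0 \<and> mdeg \<alpha> = j}. a \<alpha> * monom_val \<alpha> \<zeta>)"

definition vanishes_to_order :: "(('d::finite) multiidx \<Rightarrow> complex) \<Rightarrow> nat \<Rightarrow> bool" where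
  "vanishes_to_order a M \<longleftrightarrow>
     (\<forall>j<M. \<forall>\<zeta>. hom_part a j \<zeta> = 0) \<and> (\<exists>\<zeta>. hom_part a M \<zeta> \<noteq> 0)"

definition vanishes_to_order_at_least :: "(('d::finite) multiidx \<Rightarrow> complex) \<Rightarrow> nat \<Rightarrow> bool" where
  "vanishes_to_order_at_least a M \<longleftrightarrow> (\<forall>j<M. \<forall>\<zeta>. hom_part a j \<zeta> = 0)"

definition polydisc :: "(complex^('d::finite)) set" where
  "polydisc = {z. \<forall>i. norm (z $ i) < 1}"

definition RHP_d :: "(complex^('d::finite)) set" where
  "RHP_d = {\<zeta>. \<forall>i. Re (\<zeta> $ i) > 0}"

definition Dset :: "complex^('d::finite) \<Rightarrow> real set" where
  "Dset \<zeta> = range (\<lambda>i. norm (\<zeta> $ i)) \<union> range (\<lambda>i. Re (\<zeta> $ i))"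

definition AR :: "real \<Rightarrow> (complex^('d::finite)) set" where
  "AR c = {\<zeta> \<in> RHP_d. \<forall>x\<in>Dset \<zeta>. \<forall>y\<in>Dset \<zeta>. 1/c \<le> x/y \<and> x/y \<le> c}"

definition nt_limit :: "(complex^('d::finite) \<Rightarrow> complex) \<Rightarrow> complex \<Rightarrow> bool" where
  "nt_limit f L \<longleftrightarrow> (\<forall>c>1. ((\<lambda>\<zeta>. f (uvec - \<zeta>)) \<longlongrightarrow> L) (at 0 within AR c))"

end

theory Submission imports Defs "HOL-Complex_Analysis.Complex_Analysis" begin

no_notation fps_nth (infixl \<open>$\<close> 75)

definition Ev :: "(('d::finite) multiidx \<Rightarrow> complex) \<Rightarrow> complex^'d \<Rightarrow> complex" where
  "Ev a \<zeta> = (\<Sum>\<alpha>\<in>{\<alpha>. a \<alpha> \<noteq> 0}. a \<alpha> * monom_val \<alpha> \<zeta>)"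

definition Rem :: "(('d::finite) multiidx \<Rightarrow> complex) \<Rightarrow> nat \<Rightarrow> complex^'d \<Rightarrow> complex" where
  "Rem a M \<zeta> = (\<Sum>\<alpha>\<in>{\<alpha>. a \<alpha> \<noteq> 0 \<and> M < mdeg \<alpha>}. a \<alpha> * monom_val \<alpha> \<zeta>)"

lemma poly_at_u_Ev: "poly_at_u a (uvec - \<zeta>) = Ev a \<zeta>"
  by (simp add: poly_at_u_def Ev_def)

lemma Ev_split:
  assumes fin: "finite {\<alpha>. a \<alpha> \<noteq> 0}" and van: "vanishes_to_order_at_least a M"
  shows "Ev a \<zeta> = hom_part a M \<zeta> + Rem a M \<zeta>"
proof -
  define S where "S = {\<alpha>. a \<alpha> \<noteq> 0}"
  define g where "g = (\<lambda>\<alpha>. a \<alpha> * monom_val \<alpha> \<zeta>)"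
  have fS: "finite S" using fin S_def by simp
  have "Ev a \<zeta> = (\<Sum>\<alpha>\<in>S. (if mdeg \<alpha> < M then g \<alpha> else 0) + (if mdeg \<alpha> = M then g \<alpha> else 0)
      + (if M < mdeg \<alpha> then g \<alpha> else 0))"
    unfolding Ev_def S_def g_def by (intro sum.cong) auto
  also have "\<dots> = (\<Sum>\<alpha>\<in>{\<alpha>\<in>S. mdeg \<alpha> < M}. g \<alpha>) + (\<Sum>\<alpha>\<in>{\<alpha>\<in>S. mdeg \<alpha> = M}. g \<alpha>)
      + (\<Sum>\<alpha>\<in>{\<alpha>\<in>S. M < mdeg \<alpha>}. g \<alpha>)"
    by (simp add: sum.distrib sum.inter_filter[OF fS])
  also have "(\<Sum>\<alpha>\<in>{\<alpha>\<in>S. mdeg \<alpha> < M}. g \<alpha>) = 0"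
  proof -
    have "(\<Sum>\<alpha>\<in>{\<alpha>\<in>S. mdeg \<alpha> < M}. g \<alpha>) = (\<Sum>j\<in>{..<M}. \<Sum>\<alpha>\<in>{x. x \<in> {\<alpha>\<in>S. mdeg \<alpha> < M} \<and> mdeg x = j}. g \<alpha>)"
      by (rule sum.group[symmetric]) (use fS in auto)
    also have "\<dots> = (\<Sum>j\<in>{..<M}. hom_part a j \<zeta>)"
      unfolding hom_part_def S_def g_def by (intro sum.cong refl) auto
    also have "\<dots> = 0" using van unfolding vanishes_to_order_at_least_def by simp
    finally show ?thesis .
  qed
  finally show ?thesis unfolding hom_part_def Rem_def S_def g_def by simp
qed

lemma monom_val_scale: "monom_val \<alpha> (t *\<^sub>R \<zeta>) = (complex_of_real t) ^ mdeg \<alpha> * monom_val \<alpha> \<zeta>"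
  unfolding monom_val_def mdeg_def vector_scaleR_component
  by (simp add: scaleR_conv_of_real power_mult_distrib prod.distrib power_sum)

lemma hom_part_scale: "hom_part a j (t *\<^sub>R \<zeta>) = (complex_of_real t) ^ j * hom_part a j \<zeta>"
  by (simp add: hom_part_def monom_val_scale sum_distrib_left mult_ac)

lemma monom_bound:
  assumes "\<And>i. norm (\<zeta> $ i) \<le> B"
  shows "norm (monom_val \<alpha> \<zeta>) \<le> B ^ mdeg \<alpha>"
proof -
  have "norm (monom_val \<alpha> \<zeta>) = (\<Prod>i\<in>UNIV. norm (\<zeta> $ i) ^ \<alpha> i)"
    by (simp add: monom_val_def prod_norm[symmetric] norm_power)
  also have "\<dots> \<le> (\<Prod>i\<in>UNIV. B ^ \<alpha> i)"
    by (intro prod_mono conjI power_mono assms) auto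
  also have "\<dots> = B ^ mdeg \<alpha>" by (simp add: mdeg_def power_sum)
  finally show ?thesis .
qed


lemma Rem_bound:
  fixes \<zeta> :: "complex^'d::finite"
  assumes fin: "finite {\<alpha>. a \<alpha> \<noteq> 0}" and B: "\<And>i. norm (\<zeta> $ i) \<le> B" "0 \<le> B" "B \<le> 1"
  shows "norm (Rem a M \<zeta>) \<le> (\<Sum>\<alpha>\<in>{\<alpha>. a \<alpha> \<noteq> 0}. norm (a \<alpha>)) * B ^ (Suc M)"
proof -
  have fin2: "finite {\<alpha>. a \<alpha> \<noteq> 0 \<and> M < mdeg \<alpha>}" by (rule finite_subset[OF _ fin]) auto
  have "norm (Rem a M \<zeta>) \<le> (\<Sum>\<alpha>\<in>{\<alpha>. a \<alpha> \<noteq> 0 \<and> M < mdeg \<alpha>}. norm (a \<alpha> * monom_val \<alpha> \<zeta>))"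
    unfolding Rem_def by (rule norm_sum)
  also have "\<dots> \<le> (\<Sum>\<alpha>\<in>{\<alpha>. a \<alpha> \<noteq> 0 \<and> M < mdeg \<alpha>}. norm (a \<alpha>) * B ^ (Suc M))"
  proof (intro sum_mono)
    fix \<alpha> assume "\<alpha> \<in> {\<alpha>. a \<alpha> \<noteq> 0 \<and> M < mdeg \<alpha>}"
    then have "Suc M \<le> mdeg \<alpha>" by auto
    have "norm (monom_val \<alpha> \<zeta>) \<le> B ^ mdeg \<alpha>" by (rule monom_bound[OF B(1)])
    also have "\<dots> \<le> B ^ Suc M" by (rule power_decreasing[OF \<open>Suc M \<le> mdeg \<alpha>\<close> B(2,3)])
    finally show "norm (a \<alpha> * monom_val \<alpha> \<zeta>) \<le> norm (a \<alpha>) * B ^ (Suc M)"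
      by (simp add: norm_mult mult_left_mono)
  qed
  also have "\<dots> = (\<Sum>\<alpha>\<in>{\<alpha>. a \<alpha> \<noteq> 0 \<and> M < mdeg \<alpha>}. norm (a \<alpha>)) * B ^ (Suc M)"
    by (simp add: sum_distrib_right)
  also have "\<dots> \<le> (\<Sum>\<alpha>\<in>{\<alpha>. a \<alpha> \<noteq> 0}. norm (a \<alpha>)) * B ^ (Suc M)"
    by (intro mult_right_mono sum_mono2 fin) (auto simp: B)
  finally show ?thesis .
qed

lemma hom_bound:
  fixes \<zeta> :: "complex^'d::finite"
  assumes fin: "finite {\<alpha>. a \<alpha> \<noteq> 0}" and B: "\<And>i. norm (\<zeta> $ i) \<le> B" "0 \<le> B"
  shows "norm (hom_part a M \<zeta>) \<le> (\<Sum>\<alpha>\<in>{\<alpha>. a \<alpha> \<noteq> 0}. norm (a \<alpha>)) * B ^ M"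
proof -
  have "norm (hom_part a M \<zeta>) \<le> (\<Sum>\<alpha>\<in>{\<alpha>. a \<alpha> \<noteq> 0 \<and> mdeg \<alpha> = M}. norm (a \<alpha> * monom_val \<alpha> \<zeta>))"
    unfolding hom_part_def by (rule norm_sum)
  also have "\<dots> \<le> (\<Sum>\<alpha>\<in>{\<alpha>. a \<alpha> \<noteq> 0 \<and> mdeg \<alpha> = M}. norm (a \<alpha>) * B ^ M)"
  proof (intro sum_mono)
    fix \<alpha> assume "\<alpha> \<in> {\<alpha>. a \<alpha> \<noteq> 0 \<and> mdeg \<alpha> = M}"
    then have "mdeg \<alpha> = M" by auto
    have "norm (monom_val \<alpha> \<zeta>) \<le> B ^ M" using monom_bound[OF B(1)] \<open>mdeg \<alpha> = M\<close> by metis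
    then show "norm (a \<alpha> * monom_val \<alpha> \<zeta>) \<le> norm (a \<alpha>) * B ^ M"
      by (simp add: norm_mult mult_left_mono)
  qed
  also have "\<dots> = (\<Sum>\<alpha>\<in>{\<alpha>. a \<alpha> \<noteq> 0 \<and> mdeg \<alpha> = M}. norm (a \<alpha>)) * B ^ M"
    by (simp add: sum_distrib_right)
  also have "\<dots> \<le> (\<Sum>\<alpha>\<in>{\<alpha>. a \<alpha> \<noteq> 0}. norm (a \<alpha>)) * B ^ M"
    by (intro mult_right_mono sum_mono2 fin) (auto simp: B)
  finally show ?thesis .
qed

lemma disc_lemma:
  assumes "0 < t" "0 < Re z" "t * (norm z)^2 < 2 * Re z"
  shows "norm (1 - complex_of_real t * z) < 1"
proof -
  have "(norm (1 - complex_of_real t * z))^2 = (1 - t * Re z)^2 + (t * Im z)^2"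
    by (simp add: cmod_power2)
  also have "\<dots> = 1 - 2 * t * Re z + t * (t * (norm z)^2)"
  proof -
    have h: "(norm z)^2 = (Re z)^2 + (Im z)^2" by (simp add: cmod_power2)
    show ?thesis unfolding h by (simp add: power2_eq_square algebra_simps)
  qed
  also have "\<dots> < 1"
  proof -
    have "t * (t * (norm z)^2) < t * (2 * Re z)" using assms by simp
    then show ?thesis by simp
  qed
  finally have "(norm (1 - complex_of_real t * z))^2 < 1\<^sup>2" by simp
  then show ?thesis by (rule power2_less_imp_less) simp
qed

definition lin :: "complex^('d::finite) \<Rightarrow> complex^'d \<Rightarrow> complex \<Rightarrow> complex^'d" where
  "lin A B w = (\<chi> i. A $ i + w * B $ i)"

lemma lin_scale: "t *\<^sub>R lin A B w = lin (t *\<^sub>R A) (t *\<^sub>R B) w"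
  by (simp add: lin_def vec_eq_iff scaleR_conv_of_real algebra_simps)

lemma lin_0: "lin A B 0 = A" and lin_1: "lin A B 1 = A + B"
  by (simp_all add: lin_def vec_eq_iff)

lemma holo_lin: "(\<lambda>w. \<Sum>\<alpha>\<in>S. c \<alpha> * monom_val \<alpha> (lin A B w)) holomorphic_on U"
  unfolding monom_val_def lin_def by (simp; intro holomorphic_intros)

lemma cont_hom: "continuous_on U (hom_part a M)"
  unfolding hom_part_def monom_val_def by (intro continuous_intros)


lemma Ev_lin_holo: "(\<lambda>w. Ev a (lin A B w)) holomorphic_on U"
  unfolding Ev_def by (rule holo_lin)

lemma hom_lin_holo: "(\<lambda>w. hom_part a M (lin A B w)) holomorphic_on U"
  unfolding hom_part_def by (rule holo_lin)

lemma hom_nonzero_RHP: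
  fixes a :: "('d::finite) multiidx \<Rightarrow> complex"
  assumes fin: "finite {\<alpha>. a \<alpha> \<noteq> 0}" and nz: "\<forall>z\<in>polydisc. poly_at_u a z \<noteq> 0"
    and vto: "vanishes_to_order a M" and z0: "\<zeta>0 \<in> RHP_d"
  shows "hom_part a M \<zeta>0 \<noteq> 0"
proof
  assume P0: "hom_part a M \<zeta>0 = 0"
  from vto obtain \<zeta>1 where P1: "hom_part a M \<zeta>1 \<noteq> 0" unfolding vanishes_to_order_def by auto
  have van: "vanishes_to_order_at_least a M"
    using vto unfolding vanishes_to_order_def vanishes_to_order_at_least_def by simp
  define v where "v = \<zeta>1 - \<zeta>0"
  define m where "m = Min (range (\<lambda>i. Re (\<zeta>0 $ i)))"
  have m_le: "m \<le> Re (\<zeta>0 $ i)" for i unfolding m_def by (rule Min_le) auto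
  have "m \<in> range (\<lambda>i. Re (\<zeta>0 $ i))" unfolding m_def by (rule Min_in) auto
  then have m_pos: "0 < m" using z0 unfolding RHP_d_def by auto
  define V where "V = norm v + 1"
  have V_pos: "0 < V" unfolding V_def using norm_ge_zero[of v] by linarith
  define r where "r = m / (2 * V)"
  have r_pos: "0 < r" unfolding r_def using m_pos V_pos by simp
  define B where "B = norm \<zeta>0 + m"
  have B_pos: "0 < B" unfolding B_def using m_pos norm_ge_zero[of \<zeta>0] by linarith
  have wv: "norm (w * v $ i) < m / 2" if "w \<in> ball 0 r" for w i
  proof -
    have "norm (w * v $ i) = norm w * norm (v $ i)" by (simp add: norm_mult)
    also have "\<dots> \<le> norm w * V"
      using Finite_Cartesian_Product.norm_nth_le[of v i] unfolding V_def by (intro mult_left_mono) auto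
    also have "\<dots> < r * V" using that V_pos by (intro mult_strict_right_mono) auto
    also have "\<dots> = m / 2" unfolding r_def using V_pos by simp
    finally show ?thesis .
  qed
  have lin_Re: "m / 2 < Re (lin \<zeta>0 v w $ i)" if "w \<in> ball 0 r" for w i
  proof -
    have "\<bar>Re (w * v $ i)\<bar> \<le> norm (w * v $ i)" by (rule abs_Re_le_cmod)
    then show ?thesis using wv[OF that, of i] m_le[of i] by (simp add: lin_def)
  qed
  have lin_B: "norm (lin \<zeta>0 v w $ i) \<le> B" if "w \<in> ball 0 r" for w i
  proof -
    have "norm (lin \<zeta>0 v w $ i) \<le> norm (\<zeta>0 $ i) + norm (w * v $ i)"
      unfolding lin_def by (simp add: norm_triangle_ineq)
    also have "\<dots> \<le> norm \<zeta>0 + m"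
      using Finite_Cartesian_Product.norm_nth_le[of \<zeta>0 i] wv[OF that, of i] m_pos by simp
    finally show ?thesis unfolding B_def .
  qed
  define \<delta> where "\<delta> = min (1 / B) (m / (2 * B^2))"
  have \<delta>_pos: "0 < \<delta>" unfolding \<delta>_def using B_pos m_pos by simp
  define t where "t = (\<lambda>n::nat. \<delta> / real (Suc n))"
  have t_pos: "0 < t n" for n unfolding t_def using \<delta>_pos by simp
  have t_le: "t n \<le> \<delta>" for n
    unfolding t_def using \<delta>_pos by (simp add: divide_le_eq)
  define F where "F = (\<lambda>n w. Ev a (lin (t n *\<^sub>R \<zeta>0) (t n *\<^sub>R v) w) / (complex_of_real (t n))^M)"
  define g where "g = (\<lambda>w. hom_part a M (lin \<zeta>0 v w))"
  define Ca where "Ca = (\<Sum>\<alpha>\<in>{\<alpha>. a \<alpha> \<noteq> 0}. norm (a \<alpha>))"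
  have Ca_nn: "0 \<le> Ca" unfolding Ca_def by (simp add: sum_nonneg)
  have F_eq: "F n w = g w + Rem a M (t n *\<^sub>R lin \<zeta>0 v w) / (complex_of_real (t n))^M" for n w
  proof -
    have "Ev a (lin (t n *\<^sub>R \<zeta>0) (t n *\<^sub>R v) w) = Ev a (t n *\<^sub>R lin \<zeta>0 v w)" by (simp add: lin_scale)
    also have "\<dots> = (complex_of_real (t n))^M * g w + Rem a M (t n *\<^sub>R lin \<zeta>0 v w)"
      by (simp add: Ev_split[OF fin van] hom_part_scale g_def)
    finally show ?thesis unfolding F_def using t_pos[of n] by (simp add: field_simps)
  qed
  have polyd: "uvec - t n *\<^sub>R lin \<zeta>0 v w \<in> polydisc" if "w \<in> ball 0 r" for n w
  proof -
    have "norm (1 - complex_of_real (t n) * lin \<zeta>0 v w $ i) < 1" for i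
    proof (rule disc_lemma[OF t_pos])
      show "0 < Re (lin \<zeta>0 v w $ i)" using lin_Re[OF that, of i] m_pos by simp
      have "t n * (norm (lin \<zeta>0 v w $ i))^2 \<le> (m / (2 * B^2)) * B^2"
        using t_le[of n] lin_B[OF that, of i] t_pos[of n] B_pos unfolding \<delta>_def
        by (intro mult_mono power_mono) auto
      also have "\<dots> = m / 2" using B_pos by simp
      also have "\<dots> < 2 * Re (lin \<zeta>0 v w $ i)" using lin_Re[OF that, of i] m_pos by simp
      finally show "t n * (norm (lin \<zeta>0 v w $ i))^2 < 2 * Re (lin \<zeta>0 v w $ i)" .
    qed
    moreover have "(uvec - t n *\<^sub>R lin \<zeta>0 v w) $ i = 1 - complex_of_real (t n) * lin \<zeta>0 v w $ i" for i
      unfolding vector_minus_component vector_scaleR_component uvec_def vec_lambda_beta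
      by (simp add: scaleR_conv_of_real)
    ultimately show ?thesis by (simp add: polydisc_def)
  qed
  have "g 0 \<noteq> 0"
  proof (rule Hurwitz_no_zeros[of "ball 0 r" F g])
    show "open (ball (0::complex) r)" "connected (ball (0::complex) r)" by auto
    show "F n holomorphic_on ball 0 r" for n
      unfolding F_def by (intro holomorphic_intros Ev_lin_holo) (use t_pos in auto)
    show "g holomorphic_on ball 0 r" unfolding g_def by (rule hom_lin_holo)
    show "0 \<in> ball (0::complex) r" using r_pos by simp
    show "F n z \<noteq> 0" if "z \<in> ball 0 r" for n z
    proof -
      have "Ev a (t n *\<^sub>R lin \<zeta>0 v z) \<noteq> 0"
        using nz polyd[OF that, of n] poly_at_u_Ev[of a] by metis
      then show ?thesis unfolding F_def using t_pos[of n] by (simp add: lin_scale)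
    qed
    show "\<not> g constant_on ball 0 r"
    proof
      assume gc: "g constant_on ball 0 r"
      have "g constant_on UNIV"
        by (rule analytic_continuation'[of g UNIV "ball 0 r" 0])
           (use r_pos gc in \<open>auto simp: g_def hom_lin_holo islimpt_ball\<close>)
      then obtain y where "\<And>x. g x = y" unfolding constant_on_def by auto
      then have "g 0 = g 1" by metis
      then show False using P0 P1 by (simp add: g_def lin_0 lin_1 v_def)
    qed
    show "uniform_limit K F g sequentially" if "compact K" "K \<subseteq> ball 0 r" for K
    proof -
      have "uniform_limit (ball 0 r) F g sequentially"
        unfolding uniform_limit_iff
      proof (intro allI impI)
        fix e :: real assume e: "0 < e"
        have "(\<lambda>n. \<delta> / real (Suc n)) \<longlonglongrightarrow> 0"
          by (rule LIMSEQ_Suc[OF lim_const_over_n])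
        then have "(\<lambda>n. (Ca * B ^ Suc M) * t n) \<longlonglongrightarrow> 0"
          unfolding t_def by (rule tendsto_mult_right_zero)
        then have ev: "\<forall>\<^sub>F n in sequentially. (Ca * B ^ Suc M) * t n < e"
          using e by (rule order_tendstoD)
        show "\<forall>\<^sub>F n in sequentially. \<forall>x\<in>ball 0 r. dist (F n x) (g x) < e"
        proof (rule eventually_mono[OF ev], intro ballI)
          fix n x assume n: "(Ca * B ^ Suc M) * t n < e" and x: "x \<in> ball (0::complex) r"
          have tB: "t n * B \<le> 1"
            using t_le[of n] B_pos unfolding \<delta>_def by (simp add: field_simps)
          have "norm (Rem a M (t n *\<^sub>R lin \<zeta>0 v x)) \<le> Ca * (t n * B) ^ Suc M"
            unfolding Ca_def
          proof (rule Rem_bound[OF fin])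
            show "norm ((t n *\<^sub>R lin \<zeta>0 v x) $ i) \<le> t n * B" for i
              using lin_B[OF x, of i] t_pos[of n]
              by (simp add: vector_scaleR_component mult_left_mono)
            show "0 \<le> t n * B" using t_pos[of n] B_pos by simp
            show "t n * B \<le> 1" by (rule tB)
          qed
          then have "dist (F n x) (g x) \<le> Ca * (t n * B) ^ Suc M / (t n)^M"
            using t_pos[of n] by (simp add: F_eq dist_norm norm_divide norm_power divide_right_mono)
          also have "\<dots> = (Ca * B ^ Suc M) * t n"
            using t_pos[of n] by (simp add: power_mult_distrib field_simps)
          also have "\<dots> < e" by (rule n)
          finally show "dist (F n x) (g x) < e" .
        qed
      qed
      then show ?thesis by (rule uniform_limit_on_subset) (rule that(2))
    qed
  qed
  then show False using P0 by (simp add: g_def lin_0)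
qed


lemma AR_lower:
  fixes a :: "('d::finite) multiidx \<Rightarrow> complex"
  assumes nzR: "\<forall>\<zeta>\<in>RHP_d. hom_part a M \<zeta> \<noteq> 0" and c: "0 < c"
  shows "\<exists>k>0. \<forall>\<zeta>\<in>(AR c :: (complex^'d) set). k * norm \<zeta> ^ M \<le> norm (hom_part a M \<zeta>)"
proof -
  define K where "K = {\<zeta>::complex^'d. norm \<zeta> = 1 \<and> (\<forall>i j. norm (\<zeta> $ i) \<le> c * Re (\<zeta> $ j))}"
  have "closed K" unfolding K_def
    by (intro closed_Collect_conj closed_Collect_all closed_Collect_le closed_Collect_eq continuous_intros)
  moreover have "bounded K" unfolding K_def bounded_iff by auto
  ultimately have cK: "compact K" by (simp add: compact_eq_bounded_closed)
  have KR: "K \<subseteq> RHP_d"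
  proof
    fix \<zeta> assume z: "\<zeta> \<in> K"
    then have "\<zeta> \<noteq> 0" unfolding K_def by auto
    then obtain i where i: "\<zeta> $ i \<noteq> 0" by (auto simp: vec_eq_iff)
    show "\<zeta> \<in> RHP_d" unfolding RHP_d_def
    proof (intro CollectI allI)
      fix j
      have "0 < norm (\<zeta> $ i)" using i by simp
      also have "\<dots> \<le> c * Re (\<zeta> $ j)" using z unfolding K_def by auto
      finally show "0 < Re (\<zeta> $ j)" using c by (simp add: zero_less_mult_iff)
    qed
  qed
  have ARK: "\<zeta> \<noteq> 0 \<and> (1 / norm \<zeta>) *\<^sub>R \<zeta> \<in> K" if z: "\<zeta> \<in> AR c" for \<zeta>
  proof -
    have zR: "\<zeta> \<in> RHP_d" using z unfolding AR_def by auto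
    then have "0 < Re (\<zeta> $ i)" for i unfolding RHP_d_def by auto
    then have nz: "\<zeta> \<noteq> 0" by (metis zero_complex.simps(1) zero_index less_irrefl)
    then have s: "0 < norm \<zeta>" by simp
    have "norm (\<zeta> $ i) \<le> c * Re (\<zeta> $ j)" for i j
    proof -
      have "norm (\<zeta> $ i) \<in> Dset \<zeta>" "Re (\<zeta> $ j) \<in> Dset \<zeta>" unfolding Dset_def by auto
      then have "norm (\<zeta> $ i) / Re (\<zeta> $ j) \<le> c" using z unfolding AR_def by auto
      then show ?thesis using \<open>0 < Re (\<zeta> $ j)\<close> by (simp add: divide_le_eq)
    qed
    then have "norm (\<zeta> $ i) / norm \<zeta> \<le> c * (Re (\<zeta> $ j) / norm \<zeta>)" for i j
      using s by (simp add: divide_right_mono)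
    then show ?thesis using nz s unfolding K_def
      by (simp add: vector_scaleR_component norm_scaleR)
  qed
  show ?thesis
  proof (cases "K = {}")
    case True
    then show ?thesis using ARK by (intro exI[of _ 1]) auto
  next
    case False
    have "continuous_on K (\<lambda>\<zeta>. norm (hom_part a M \<zeta>))"
      by (intro continuous_on_norm cont_hom)
    then obtain x where x: "x \<in> K" and xmin: "\<And>y. y \<in> K \<Longrightarrow> norm (hom_part a M x) \<le> norm (hom_part a M y)"
      using continuous_attains_inf[OF cK False] by blast
    have kpos: "0 < norm (hom_part a M x)" using nzR KR x by auto
    show ?thesis
    proof (intro exI[of _ "norm (hom_part a M x)"] conjI ballI kpos)
      fix \<zeta> :: "complex^'d" assume z: "\<zeta> \<in> AR c"
      define s where "s = norm \<zeta>"
      have s: "0 < s" using ARK[OF z] unfolding s_def by simp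
      have e: "\<zeta> = s *\<^sub>R ((1 / norm \<zeta>) *\<^sub>R \<zeta>)" using s unfolding s_def by simp
      have "hom_part a M \<zeta> = (complex_of_real s)^M * hom_part a M ((1 / norm \<zeta>) *\<^sub>R \<zeta>)"
        by (subst e) (rule hom_part_scale)
      then have "norm (hom_part a M \<zeta>) = s^M * norm (hom_part a M ((1 / norm \<zeta>) *\<^sub>R \<zeta>))"
        using s by (simp add: norm_mult norm_power)
      moreover have "norm (hom_part a M x) \<le> norm (hom_part a M ((1 / norm \<zeta>) *\<^sub>R \<zeta>))"
        using xmin ARK[OF z] by blast
      ultimately show "norm (hom_part a M x) * norm \<zeta> ^ M \<le> norm (hom_part a M \<zeta>)"
        using s unfolding s_def by (simp add: mult.commute mult_left_mono)
    qed
  qed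
qed

lemma RHP_in_AR:
  fixes \<zeta>0 :: "complex^('d::finite)"
  assumes z0: "\<zeta>0 \<in> RHP_d"
  shows "\<exists>c>1. \<forall>t>0. t *\<^sub>R \<zeta>0 \<in> AR c"
proof -
  define D where "D = Dset \<zeta>0"
  have finD: "finite D" unfolding D_def Dset_def by simp
  have Re_pos: "0 < Re (\<zeta>0 $ i)" for i using z0 unfolding RHP_d_def by auto
  have Dpos: "0 < x" if "x \<in> D" for x
  proof -
    from that obtain i where "x = norm (\<zeta>0 $ i) \<or> x = Re (\<zeta>0 $ i)" unfolding D_def Dset_def by auto
    then show ?thesis using Re_pos[of i] abs_Re_le_cmod[of "\<zeta>0 $ i"] by auto
  qed
  define c where "c = 2 + (\<Sum>x\<in>D. \<Sum>y\<in>D. x / y)"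
  have nn: "0 \<le> (\<Sum>x\<in>D. \<Sum>y\<in>D. x / y)"
    using Dpos by (intro sum_nonneg) (simp add: less_imp_le)
  have ratio: "x / y \<le> c" if "x \<in> D" "y \<in> D" for x y
  proof -
    have "x / y \<le> (\<Sum>y'\<in>D. x / y')"
      using that Dpos by (intro member_le_sum finD) (auto intro!: divide_nonneg_pos less_imp_le)
    also have "\<dots> \<le> (\<Sum>x'\<in>D. \<Sum>y'\<in>D. x' / y')"
      using that Dpos by (intro member_le_sum[of x D "\<lambda>x'. \<Sum>y'\<in>D. x' / y'"] finD sum_nonneg)
         (auto intro!: divide_nonneg_pos less_imp_le)
    finally show ?thesis unfolding c_def by simp
  qed
  have c1: "1 < c" unfolding c_def using nn by simp
  have DS: "Dset (t *\<^sub>R \<zeta>0) = (\<lambda>x. t * x) ` D" if "0 < t" for t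
    unfolding D_def Dset_def using that
    by (auto simp: vector_scaleR_component image_Un image_image norm_scaleR)
  show ?thesis
  proof (intro exI[of _ c] conjI c1 allI impI)
    fix t :: real assume t: "0 < t"
    have "t *\<^sub>R \<zeta>0 \<in> RHP_d" using Re_pos t unfolding RHP_d_def by (simp add: vector_scaleR_component)
    moreover have "1 / c \<le> x / y \<and> x / y \<le> c" if hxy: "x \<in> Dset (t *\<^sub>R \<zeta>0)" "y \<in> Dset (t *\<^sub>R \<zeta>0)" for x y
    proof -
      obtain x' y' where xy: "x = t * x'" "y = t * y'" "x' \<in> D" "y' \<in> D"
        using hxy DS[OF t] by auto
      have q: "x / y = x' / y'" using t xy by simp
      have px: "0 < x'" "0 < y'" using Dpos xy by auto
      have "y' / x' \<le> c" by (rule ratio) (use xy in auto)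
      then have "1 / c \<le> 1 / (y' / x')" using px c1 by (intro divide_left_mono) (auto intro!: divide_pos_pos mult_pos_pos)
      then show ?thesis using q ratio[OF xy(3,4)] px by simp
    qed
    ultimately show "t *\<^sub>R \<zeta>0 \<in> AR c" unfolding AR_def by blast
  qed
qed


lemma scaled_lim:
  fixes \<zeta>0 :: "complex^('d::finite)"
  assumes fin: "finite {\<alpha>. a \<alpha> \<noteq> 0}" and van: "vanishes_to_order_at_least a M"
  shows "((\<lambda>t. Ev a (t *\<^sub>R \<zeta>0) / (complex_of_real t)^M) \<longlongrightarrow> hom_part a M \<zeta>0) (at_right 0)"
proof -
  define B where "B = norm \<zeta>0 + 1"
  have B: "0 < B" unfolding B_def using norm_ge_zero[of \<zeta>0] by linarith
  define Ca where "Ca = (\<Sum>\<alpha>\<in>{\<alpha>. a \<alpha> \<noteq> 0}. norm (a \<alpha>))"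
  have eq: "Ev a (t *\<^sub>R \<zeta>0) / (complex_of_real t)^M = hom_part a M \<zeta>0 + Rem a M (t *\<^sub>R \<zeta>0) / (complex_of_real t)^M"
    if "0 < t" for t
    using that by (simp add: Ev_split[OF fin van] hom_part_scale field_simps)
  have "((\<lambda>t. Rem a M (t *\<^sub>R \<zeta>0) / (complex_of_real t)^M) \<longlongrightarrow> 0) (at_right 0)"
  proof (rule Lim_null_comparison)
    have "((\<lambda>t::real. (Ca * B ^ Suc M) * t) \<longlongrightarrow> (Ca * B ^ Suc M) * 0) (at_right 0)"
      by (intro tendsto_intros)
    then show "((\<lambda>t::real. (Ca * B ^ Suc M) * t) \<longlongrightarrow> 0) (at_right 0)" by simp
    have "\<forall>\<^sub>F t in at_right 0. 0 < t \<and> t < 1 / B"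
      using B by (intro eventually_conj eventually_at_right_less) (auto simp: eventually_at_right intro!: exI[of _ "1 / B"])
    then show "\<forall>\<^sub>F t in at_right 0. norm (Rem a M (t *\<^sub>R \<zeta>0) / (complex_of_real t)^M) \<le> (Ca * B ^ Suc M) * t"
    proof (rule eventually_mono)
      fix t :: real assume t: "0 < t \<and> t < 1 / B"
      have "norm (Rem a M (t *\<^sub>R \<zeta>0)) \<le> Ca * (t * B) ^ Suc M"
        unfolding Ca_def
      proof (rule Rem_bound[OF fin])
        show "norm ((t *\<^sub>R \<zeta>0) $ i) \<le> t * B" for i
          using Finite_Cartesian_Product.norm_nth_le[of \<zeta>0 i] t unfolding B_def
          by (simp add: vector_scaleR_component mult_left_mono)
        show "0 \<le> t * B" using t B by simp
        show "t * B \<le> 1" using t B by (simp add: field_simps)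
      qed
      then have "norm (Rem a M (t *\<^sub>R \<zeta>0) / (complex_of_real t)^M) \<le> Ca * (t * B) ^ Suc M / t^M"
        using t by (simp add: norm_divide norm_power divide_right_mono)
      also have "\<dots> = (Ca * B ^ Suc M) * t"
        using t by (simp add: power_mult_distrib field_simps)
      finally show "norm (Rem a M (t *\<^sub>R \<zeta>0) / (complex_of_real t)^M) \<le> (Ca * B ^ Suc M) * t" .
    qed
  qed
  then have "((\<lambda>t. hom_part a M \<zeta>0 + Rem a M (t *\<^sub>R \<zeta>0) / (complex_of_real t)^M) \<longlongrightarrow> hom_part a M \<zeta>0 + 0) (at_right 0)"
    by (intro tendsto_intros)
  then have L: "((\<lambda>t. hom_part a M \<zeta>0 + Rem a M (t *\<^sub>R \<zeta>0) / (complex_of_real t)^M) \<longlongrightarrow> hom_part a M \<zeta>0) (at_right 0)"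
    by simp
  have "\<forall>\<^sub>F t in at_right 0. hom_part a M \<zeta>0 + Rem a M (t *\<^sub>R \<zeta>0) / (complex_of_real t)^M = Ev a (t *\<^sub>R \<zeta>0) / (complex_of_real t)^M"
    using eventually_at_right_less[of "0::real"] by (rule eventually_mono) (simp add: eq)
  then show ?thesis by (rule Lim_transform_eventually[OF L])
qed


theorem proposition14p3:
  fixes a b :: "('d::finite) multiidx \<Rightarrow> complex" and M :: nat
  assumes "finite {\<alpha>. a \<alpha> \<noteq> 0}" and "finite {\<alpha>. b \<alpha> \<noteq> 0}"
    and "\<forall>z\<in>polydisc. poly_at_u a z \<noteq> 0"
    and "vanishes_to_order a M"
    and "vanishes_to_order_at_least b M"
  defines "f \<equiv> (\<lambda>z. poly_at_u b z / poly_at_u a z)"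
  shows "((\<exists>L. nt_limit f L) \<longleftrightarrow> (\<exists>\<beta>. \<forall>\<zeta>. hom_part b M \<zeta> = \<beta> * hom_part a M \<zeta>))
    \<and> (\<forall>\<beta>. (\<forall>\<zeta>. hom_part b M \<zeta> = \<beta> * hom_part a M \<zeta>) \<longrightarrow> nt_limit f \<beta>)"
proof -
  note fina = assms(1) and finb = assms(2) and nz = assms(3) and vto = assms(4) and vanb = assms(5)
  have vana: "vanishes_to_order_at_least a M"
    using vto unfolding vanishes_to_order_def vanishes_to_order_at_least_def by simp
  have nzR: "\<forall>\<zeta>\<in>RHP_d. hom_part a M \<zeta> \<noteq> 0"
    using hom_nonzero_RHP[OF fina nz vto] by blast
  have fEv: "f (uvec - \<zeta>) = Ev b \<zeta> / Ev a \<zeta>" for \<zeta>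
    unfolding f_def by (simp add: poly_at_u_Ev)
  define Ca where "Ca = (\<Sum>\<alpha>\<in>{\<alpha>. a \<alpha> \<noteq> 0}. norm (a \<alpha>))"
  define Cb where "Cb = (\<Sum>\<alpha>\<in>{\<alpha>. b \<alpha> \<noteq> 0}. norm (b \<alpha>))"
  have Ca: "0 \<le> Ca" unfolding Ca_def by (simp add: sum_nonneg)
  have Cb: "0 \<le> Cb" unfolding Cb_def by (simp add: sum_nonneg)
  have part2: "nt_limit f \<beta>" if H: "\<forall>\<zeta>. hom_part b M \<zeta> = \<beta> * hom_part a M \<zeta>" for \<beta>
    unfolding nt_limit_def
  proof (intro allI impI)
    fix c :: real assume c: "1 < c"
    obtain k where k: "0 < k" and kb: "\<And>\<zeta>. \<zeta> \<in> (AR c :: (complex^'d) set) \<Longrightarrow> k * norm \<zeta> ^ M \<le> norm (hom_part a M \<zeta>)"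
      using AR_lower[OF nzR, of c] c by auto
    define C1 where "C1 = Cb + norm \<beta> * Ca"
    have C1: "0 \<le> C1" unfolding C1_def using Ca Cb by simp
    define K where "K = 2 * C1 / k + 1"
    have K: "0 < K" unfolding K_def using C1 k by (simp add: add_nonneg_pos)
    show "((\<lambda>\<zeta>. f (uvec - \<zeta>)) \<longlongrightarrow> \<beta>) (at 0 within AR c)"
      unfolding Lim_within_le
    proof (intro allI impI)
      fix \<epsilon> :: real assume \<epsilon>: "0 < \<epsilon>"
      define \<delta> where "\<delta> = min 1 (min (k / (2 * (Ca + 1))) (\<epsilon> / (2 * K)))"
      have \<delta>: "0 < \<delta>" unfolding \<delta>_def using k Ca \<epsilon> K by simp
      show "\<exists>\<delta>>0. \<forall>x\<in>AR c. 0 < dist x 0 \<and> dist x 0 \<le> \<delta> \<longrightarrow> dist (f (uvec - x)) \<beta> < \<epsilon>"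
      proof (intro exI[of _ \<delta>] conjI \<delta> ballI impI)
        fix \<zeta> :: "complex^'d" assume z: "\<zeta> \<in> AR c" and d: "0 < dist \<zeta> 0 \<and> dist \<zeta> 0 \<le> \<delta>"
        define s where "s = norm \<zeta>"
        have s: "0 < s" "s \<le> \<delta>" using d unfolding s_def by auto
        have s1: "s \<le> 1" "s \<le> k / (2 * (Ca + 1))" "s \<le> \<epsilon> / (2 * K)"
          using s unfolding \<delta>_def by auto
        have comp: "norm (\<zeta> $ i) \<le> s" for i unfolding s_def by (rule Finite_Cartesian_Product.norm_nth_le)
        have Ra: "norm (Rem a M \<zeta>) \<le> Ca * s ^ Suc M"
          unfolding Ca_def by (rule Rem_bound[OF fina comp]) (use s s1 in auto)
        have Rb: "norm (Rem b M \<zeta>) \<le> Cb * s ^ Suc M"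
          unfolding Cb_def by (rule Rem_bound[OF finb comp]) (use s s1 in auto)
        have P: "k * s ^ M \<le> norm (hom_part a M \<zeta>)" using kb[OF z] unfolding s_def .
        have "Ca * s ^ Suc M = (Ca * s) * s ^ M" by simp
        also have "\<dots> \<le> (k / 2) * s ^ M"
        proof (intro mult_right_mono)
          have "Ca * s \<le> (Ca + 1) * (k / (2 * (Ca + 1)))"
            using s s1 Ca by (intro mult_mono) auto
          also have "\<dots> = k / 2" using Ca by (simp add: field_simps)
          finally show "Ca * s \<le> k / 2" .
        qed (use s in simp)
        finally have Ra2: "norm (Rem a M \<zeta>) \<le> (k / 2) * s ^ M" using Ra by linarith
        have Ea: "(k / 2) * s ^ M \<le> norm (Ev a \<zeta>)"
        proof -
          have "norm (hom_part a M \<zeta>) \<le> norm (Ev a \<zeta>) + norm (Rem a M \<zeta>)"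
            using norm_triangle_ineq4[of "Ev a \<zeta>" "Rem a M \<zeta>"] by (simp add: Ev_split[OF fina vana])
          then show ?thesis using P Ra2 by simp
        qed
        have Dpos: "0 < (k / 2) * s ^ M" using k s by simp
        have num: "Ev b \<zeta> - \<beta> * Ev a \<zeta> = Rem b M \<zeta> - \<beta> * Rem a M \<zeta>"
          by (simp add: Ev_split[OF fina vana] Ev_split[OF finb vanb] H algebra_simps)
        have N: "norm (Ev b \<zeta> - \<beta> * Ev a \<zeta>) \<le> C1 * s ^ Suc M"
        proof -
          have "norm (Rem b M \<zeta> - \<beta> * Rem a M \<zeta>) \<le> norm (Rem b M \<zeta>) + norm \<beta> * norm (Rem a M \<zeta>)"
            by (metis norm_mult norm_triangle_ineq4)
          also have "\<dots> \<le> Cb * s ^ Suc M + norm \<beta> * (Ca * s ^ Suc M)"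
            using Ra Rb by (intro add_mono mult_left_mono) auto
          finally show ?thesis unfolding num C1_def by (simp add: algebra_simps)
        qed
        have Ea0: "Ev a \<zeta> \<noteq> 0" using Ea Dpos by auto
        have "dist (f (uvec - \<zeta>)) \<beta> = norm (Ev b \<zeta> - \<beta> * Ev a \<zeta>) / norm (Ev a \<zeta>)"
          using Ea0 by (simp add: fEv dist_norm norm_divide[symmetric] diff_divide_distrib)
        also have "\<dots> \<le> (C1 * s ^ Suc M) / ((k / 2) * s ^ M)"
          by (rule frac_le[OF _ N Dpos Ea]) (use C1 s in simp)
        also have "\<dots> = (2 * C1 / k) * s" using k s by (simp add: field_simps)
        also have "\<dots> \<le> K * s" unfolding K_def using s by (intro mult_right_mono) auto
        also have "\<dots> \<le> K * (\<epsilon> / (2 * K))" using K s1 by (intro mult_left_mono) auto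
        also have "\<dots> < \<epsilon>" using K \<epsilon> by simp
        finally show "dist (f (uvec - \<zeta>)) \<beta> < \<epsilon>" .
      qed
    qed
  qed
  have part1: "\<exists>\<beta>. \<forall>\<zeta>. hom_part b M \<zeta> = \<beta> * hom_part a M \<zeta>" if NL: "nt_limit f L" for L
  proof -
    have onR: "hom_part b M \<zeta>0 = L * hom_part a M \<zeta>0" if z0: "\<zeta>0 \<in> RHP_d" for \<zeta>0 :: "complex^'d"
    proof -
      obtain c where c: "1 < c" and tAR: "\<And>t. 0 < t \<Longrightarrow> t *\<^sub>R \<zeta>0 \<in> AR c"
        using RHP_in_AR[OF z0] by auto
      have lim: "((\<lambda>\<zeta>. f (uvec - \<zeta>)) \<longlongrightarrow> L) (at 0 within AR c)"
        using NL c unfolding nt_limit_def by auto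
      have z0nz: "\<zeta>0 \<noteq> 0"
      proof
        assume "\<zeta>0 = 0" then show False using z0 unfolding RHP_d_def by auto
      qed
      have flt: "filterlim (\<lambda>t. t *\<^sub>R \<zeta>0) (at 0 within AR c) (at_right (0::real))"
        unfolding filterlim_at
      proof
        show "\<forall>\<^sub>F t in at_right 0. t *\<^sub>R \<zeta>0 \<in> AR c \<and> t *\<^sub>R \<zeta>0 \<noteq> 0"
          using eventually_at_right_less[of "0::real"] by (rule eventually_mono) (use tAR z0nz in auto)
        have "((\<lambda>t. t *\<^sub>R \<zeta>0) \<longlongrightarrow> (0::real) *\<^sub>R \<zeta>0) (at_right 0)"
          by (intro tendsto_intros)
        then show "((\<lambda>t. t *\<^sub>R \<zeta>0) \<longlongrightarrow> 0) (at_right 0)" by simp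
      qed
      have h: "((\<lambda>t. f (uvec - t *\<^sub>R \<zeta>0)) \<longlongrightarrow> L) (at_right 0)"
        using filterlim_compose[OF lim flt] .
      define Ea where "Ea = (\<lambda>t. Ev a (t *\<^sub>R \<zeta>0) / (complex_of_real t)^M)"
      define Eb where "Eb = (\<lambda>t. Ev b (t *\<^sub>R \<zeta>0) / (complex_of_real t)^M)"
      have la: "(Ea \<longlongrightarrow> hom_part a M \<zeta>0) (at_right 0)" unfolding Ea_def by (rule scaled_lim[OF fina vana])
      have lb: "(Eb \<longlongrightarrow> hom_part b M \<zeta>0) (at_right 0)" unfolding Eb_def by (rule scaled_lim[OF finb vanb])
      have Pnz: "hom_part a M \<zeta>0 \<noteq> 0" using nzR z0 by auto
      have evnz: "\<forall>\<^sub>F t in at_right 0. Ea t \<noteq> 0" by (rule tendsto_imp_eventually_ne[OF la Pnz])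
      have l1: "((\<lambda>t. Eb t - L * Ea t) \<longlongrightarrow> hom_part b M \<zeta>0 - L * hom_part a M \<zeta>0) (at_right 0)"
        by (intro tendsto_intros la lb)
      have l2': "((\<lambda>t. (f (uvec - t *\<^sub>R \<zeta>0) - L) * Ea t) \<longlongrightarrow> (L - L) * hom_part a M \<zeta>0) (at_right 0)"
        by (intro tendsto_intros la h)
      have "\<forall>\<^sub>F t in at_right 0. (f (uvec - t *\<^sub>R \<zeta>0) - L) * Ea t = Eb t - L * Ea t"
      proof (rule eventually_mono[OF eventually_conj[OF evnz eventually_at_right_less[of "0::real"]]])
        fix t :: real assume t: "Ea t \<noteq> 0 \<and> 0 < t"
        then have "Ev a (t *\<^sub>R \<zeta>0) \<noteq> 0" unfolding Ea_def by auto
        moreover have "(complex_of_real t) ^ M \<noteq> 0" using t by simp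
        ultimately show "(f (uvec - t *\<^sub>R \<zeta>0) - L) * Ea t = Eb t - L * Ea t"
          using t unfolding Ea_def Eb_def fEv by (simp add: field_simps)
      qed
      then have l2: "((\<lambda>t. Eb t - L * Ea t) \<longlongrightarrow> 0) (at_right 0)"
        using Lim_transform_eventually[OF l2'] by simp
      have "hom_part b M \<zeta>0 - L * hom_part a M \<zeta>0 = 0"
        using tendsto_unique[OF _ l1 l2] by simp
      then show ?thesis by simp
    qed
    have "hom_part b M \<zeta> = L * hom_part a M \<zeta>" for \<zeta> :: "complex^'d"
    proof -
      define v where "v = \<zeta> - uvec"
      define r where "r = 1 / (norm v + 1)"
      have nv: "0 < norm v + 1" using norm_ge_zero[of v] by linarith
      have r: "0 < r" unfolding r_def using nv by simp
      define g where "g = (\<lambda>w. hom_part b M (lin uvec v w) - L * hom_part a M (lin uvec v w))"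
      have inR: "lin uvec v w \<in> RHP_d" if w: "w \<in> ball 0 r" for w
        unfolding RHP_d_def
      proof (intro CollectI allI)
        fix i
        have "\<bar>Re (w * v $ i)\<bar> \<le> norm (w * v $ i)" by (rule abs_Re_le_cmod)
        also have "\<dots> = norm w * norm (v $ i)" by (simp add: norm_mult)
        also have "\<dots> \<le> norm w * (norm v + 1)"
          using Finite_Cartesian_Product.norm_nth_le[of v i] by (intro mult_left_mono) auto
        also have "\<dots> < r * (norm v + 1)"
          using w nv by (intro mult_strict_right_mono) auto
        also have "\<dots> = 1" unfolding r_def using nv by simp
        finally have "\<bar>Re (w * v $ i)\<bar> < 1" .
        then show "0 < Re (lin uvec v w $ i)" by (simp add: lin_def uvec_def)
      qed
      have "g w = 0" if "w \<in> ball 0 r" for w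
        using onR[OF inR[OF that]] unfolding g_def by simp
      then have "g 1 = (\<lambda>_. 0) 1"
        by (intro analytic_continuation_open[of "ball 0 r" UNIV g "\<lambda>_. 0" 1])
           (use r in \<open>auto simp: g_def intro!: holomorphic_intros hom_lin_holo\<close>)
      then show ?thesis by (simp add: g_def lin_1 v_def)
    qed
    then show ?thesis by blast
  qed
  show ?thesis using part1 part2 by blast
qed

end
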